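(* Let $\{p^\circ_{(R,\alpha)}\}_{(R,\alpha)}$ be a replacement rule satisfying the Fixation Axiom and representing neutral drift, and fix $u\in(0,1]$. For $\nu\in(0,1)$ let $\pi^{\nu}_{\mathrm{MSS}}$ denote the mutation–selection stationary distribution with mutation probability $u$ and mutational bias $\nu$. Then for every state $\mathbf{x}\in\{0,1\}^G$, $\pi^{\nu}_{\mathrm{MSS}}(\mathbf{x})=\pi^{1-\nu}_{\mathrm{MSS}}(\bar{\mathbf{x}})$, where $\bar x_g=1-x_g$ for all $g\in G$.
   Context: Setting. $G$ is a finite nonempty set of genetic sites; a state is $\mathbf{x}\in\{0,1\}^G$. A replacement event is $(R,\alpha)$ with $R\subseteq G$, $\alpha:R\to G$. A replacement rule representing neutral drift is a single probability distribution $\{p^\circ_{(R,\alpha)}\}$ over events, used in every state. With mutation probability $u\in[0,1]$ and bias $\nu\in(0,1)$, the evolutionary Markov chain moves from $\mathbf{x}$: draw $(R,\alpha)$ with probability $p^\circ_{(R,\alpha)}$; independently for $g\in R$, $x'_g=x_{\alpha(g)}$ w.p. $1-u$, $x'_g=1$ w.p. $u\nu$, $x'_g=0$ w.p. $u(1-\nu)$; $x'_g=x_g$ for $g\notin R$. Fixation Axiom: there exist $g\in G$, $m\ge1$, events $(R_k,\alpha_k)_{k=1}^m$ with $p^\circ_{(R_k,\alpha_k)}>0$, $g\in R_k$ for some $k$, and $\tilde\alpha_1\circ\cdots\circ\tilde\alpha_m(h)=g$ for all $h$, where $\tilde\alpha_k$ equals $\alpha_k$ on $R_k$ and the identity elsewhere.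 For $u>0$ this chain has a unique stationary distribution, the mutation–selection stationary distribution. *)

theory Defs
  imports Complex_Main
begin

text \<open>States: x \<in> {0,1}^G, represented as Boolean functions on the site type that are
  False outside G (True = 1, False = 0).\<close>
definition states :: "'g set \<Rightarrow> ('g \<Rightarrow> bool) set" where
  "states G = {x. \<forall>g. g \<notin> G \<longrightarrow> \<not> x g}"

definition flip :: "'g set \<Rightarrow> ('g \<Rightarrow> bool) \<Rightarrow> ('g \<Rightarrow> bool)" where
  "flip G x = (\<lambda>g. g \<in> G \<and> \<not> x g)"

text \<open>Replacement events (R, alpha) with R \<subseteq> G, alpha : R \<rightarrow> G.  The map alpha is
  stored extensionally as the identity outside R (i.e. it is the extended map alpha-tilde).\<close>
definition events :: "'g set \<Rightarrow> ('g set \<times> ('g \<Rightarrow> 'g)) set" where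
  "events G = {(R, \<alpha>). R \<subseteq> G \<and> (\<forall>g\<in>R. \<alpha> g \<in> G) \<and> (\<forall>g. g \<notin> R \<longrightarrow> \<alpha> g = g)}"

text \<open>A replacement rule representing neutral drift: one probability distribution over events.\<close>
definition replacement_rule :: "'g set \<Rightarrow> ('g set \<times> ('g \<Rightarrow> 'g) \<Rightarrow> real) \<Rightarrow> bool" where
  "replacement_rule G p \<longleftrightarrow>
     (\<forall>e\<in>events G. p e \<ge> 0) \<and> (\<forall>e. e \<notin> events G \<longrightarrow> p e = 0) \<and>
     (\<Sum>e\<in>events G. p e) = 1"

definition fixation_axiom :: "'g set \<Rightarrow> ('g set \<times> ('g \<Rightarrow> 'g) \<Rightarrow> real) \<Rightarrow> bool" where
  "fixation_axiom G p \<longleftrightarrow>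
     (\<exists>g\<in>G. \<exists>es. length es \<ge> 1 \<and> (\<forall>e\<in>set es. p e > 0) \<and> (\<exists>e\<in>set es. g \<in> fst e) \<and>
        (\<forall>h\<in>G. foldr (\<circ>) (map snd es) id h = g))"

definition site_prob :: "real \<Rightarrow> real \<Rightarrow> bool \<Rightarrow> bool \<Rightarrow> real" where
  "site_prob u \<nu> a b = (1 - u) * (if b = a then 1 else 0) + (if b then u * \<nu> else u * (1 - \<nu>))"

definition trans_prob ::
  "'g set \<Rightarrow> ('g set \<times> ('g \<Rightarrow> 'g) \<Rightarrow> real) \<Rightarrow> real \<Rightarrow> real \<Rightarrow> ('g \<Rightarrow> bool) \<Rightarrow> ('g \<Rightarrow> bool) \<Rightarrow> real" where
  "trans_prob G p u \<nu> x y =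
     (\<Sum>e\<in>events G. p e *
        (\<Prod>g\<in>fst e. site_prob u \<nu> (x (snd e g)) (y g)) *
        (\<Prod>g\<in>G - fst e. if y g = x g then 1 else 0))"

definition stationary ::
  "'g set \<Rightarrow> ('g set \<times> ('g \<Rightarrow> 'g) \<Rightarrow> real) \<Rightarrow> real \<Rightarrow> real \<Rightarrow> (('g \<Rightarrow> bool) \<Rightarrow> real) \<Rightarrow> bool" where
  "stationary G p u \<nu> \<pi> \<longleftrightarrow>
     (\<forall>x\<in>states G. \<pi> x \<ge> 0) \<and> (\<Sum>x\<in>states G. \<pi> x) = 1 \<and>
     (\<forall>y\<in>states G. \<pi> y = (\<Sum>x\<in>states G. \<pi> x * trans_prob G p u \<nu> x y))"

end

theory Submission
  imports Defs
begin

lemma site_prob_pos: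
  assumes "0 < u" "u \<le> 1" "0 < \<nu>" "\<nu> < 1"
  shows "site_prob u \<nu> a b > 0"
proof -
  have "(1 - u) * (if b = a then 1 else 0) \<ge> (0::real)" using assms by auto
  moreover have "(if b then u * \<nu> else u * (1 - \<nu>)) > 0" using assms by auto
  ultimately show ?thesis unfolding site_prob_def by linarith
qed

lemma site_prob_flip: "site_prob u (1 - \<nu>) (\<not> a) (\<not> b) = site_prob u \<nu> a b"
  unfolding site_prob_def by auto

lemma events_finite:
  assumes "replacement_rule G p" shows "finite (events G)"
proof (rule ccontr)
  assume "\<not> finite (events G)"
  then have "(\<Sum>e\<in>events G. p e) = 0" by simp
  with assms show False unfolding replacement_rule_def by simp
qed

lemma trans_nonneg:
  assumes "replacement_rule G p" "0 < u" "u \<le> 1" "0 < \<nu>" "\<nu> < 1"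
  shows "trans_prob G p u \<nu> x y \<ge> 0"
  unfolding trans_prob_def
proof (rule sum_nonneg)
  fix e assume e: "e \<in> events G"
  have "p e \<ge> 0" using assms(1) e unfolding replacement_rule_def by auto
  moreover have "(\<Prod>g\<in>fst e. site_prob u \<nu> (x (snd e g)) (y g)) \<ge> 0"
    by (rule prod_nonneg) (use site_prob_pos[OF assms(2-5)] less_imp_le in blast)
  moreover have "(\<Prod>g\<in>G - fst e. if y g = x g then 1 else 0) \<ge> (0::real)"
    by (rule prod_nonneg) auto
  ultimately show "p e * (\<Prod>g\<in>fst e. site_prob u \<nu> (x (snd e g)) (y g)) *
        (\<Prod>g\<in>G - fst e. if y g = x g then 1 else 0) \<ge> 0" by simp
qed

lemma trans_pos:
  assumes "replacement_rule G p" "0 < u" "u \<le> 1" "0 < \<nu>" "\<nu> < 1"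
    and e: "e \<in> events G" "p e > 0"
    and xy: "\<forall>g\<in>G - fst e. y g = x g"
  shows "trans_prob G p u \<nu> x y > 0"
proof -
  let ?t = "\<lambda>e. p e * (\<Prod>g\<in>fst e. site_prob u \<nu> (x (snd e g)) (y g)) *
        (\<Prod>g\<in>G - fst e. if y g = x g then 1 else 0)"
  have "(\<Prod>g\<in>fst e. site_prob u \<nu> (x (snd e g)) (y g)) > 0"
    by (rule prod_pos) (use site_prob_pos[OF assms(2-5)] in blast)
  moreover have "(\<Prod>g\<in>G - fst e. if y g = x g then 1 else 0) = (1::real)"
    using xy by (intro prod.neutral) auto
  ultimately have "?t e > 0" using e by simp
  also have "?t e \<le> (\<Sum>e\<in>events G. ?t e)"
  proof (rule member_le_sum)
    show "finite (events G)" by (rule events_finite[OF assms(1)])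
    show "e \<in> events G" by fact
    fix e' assume "e' \<in> events G - {e}"
    have "p e' \<ge> 0" using assms(1) \<open>e' \<in> events G - {e}\<close> unfolding replacement_rule_def by auto
    moreover have "(\<Prod>g\<in>fst e'. site_prob u \<nu> (x (snd e' g)) (y g)) \<ge> 0"
      by (rule prod_nonneg) (use site_prob_pos[OF assms(2-5)] less_imp_le in blast)
    moreover have "(\<Prod>g\<in>G - fst e'. if y g = x g then 1 else 0) \<ge> (0::real)"
      by (rule prod_nonneg) auto
    ultimately show "?t e' \<ge> 0" by simp
  qed
  finally show ?thesis unfolding trans_prob_def .
qed

lemma foldr_fix:
  assumes "\<forall>e\<in>set es. e \<in> events G \<and> h \<notin> fst e"
  shows "foldr (\<circ>) (map snd es) id h = h"
  using assms by (induction es) (auto simp: events_def)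

lemma states_finite: "finite G \<Longrightarrow> finite (states G)"
proof -
  assume "finite G"
  have "states G = (\<lambda>S g. g \<in> S) ` Pow G"
  proof
    show "states G \<subseteq> (\<lambda>S g. g \<in> S) ` Pow G"
    proof
      fix x assume "x \<in> states G"
      then have "x = (\<lambda>g. g \<in> {g\<in>G. x g})" "{g\<in>G. x g} \<in> Pow G"
        unfolding states_def by auto
      then show "x \<in> (\<lambda>S g. g \<in> S) ` Pow G" by blast
    qed
  qed (auto simp: states_def)
  then show ?thesis using \<open>finite G\<close> by simp
qed

lemma flip_states: "x \<in> states G \<Longrightarrow> flip G x \<in> states G"
  by (auto simp: states_def flip_def)

lemma flip_flip: "x \<in> states G \<Longrightarrow> flip G (flip G x) = x"
  by (auto simp: states_def flip_def)

lemma trans_flip: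
  assumes "x \<in> states G" "y \<in> states G"
  shows "trans_prob G p u (1 - \<nu>) (flip G x) (flip G y) = trans_prob G p u \<nu> x y"
  unfolding trans_prob_def
proof (rule sum.cong[OF refl])
  fix e assume e: "e \<in> events G"
  have "(\<Prod>g\<in>fst e. site_prob u (1 - \<nu>) (flip G x (snd e g)) (flip G y g))
      = (\<Prod>g\<in>fst e. site_prob u \<nu> (x (snd e g)) (y g))"
  proof (rule prod.cong[OF refl])
    fix g assume "g \<in> fst e"
    with e have "g \<in> G" "snd e g \<in> G" by (auto simp: events_def)
    then show "site_prob u (1 - \<nu>) (flip G x (snd e g)) (flip G y g) = site_prob u \<nu> (x (snd e g)) (y g)"
      by (simp add: flip_def site_prob_flip)
  qed
  moreover have "(\<Prod>g\<in>G - fst e. if flip G y g = flip G x g then 1 else 0)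
      = (\<Prod>g\<in>G - fst e. if y g = x g then 1 else (0::real))"
    by (rule prod.cong[OF refl]) (auto simp: flip_def)
  ultimately show "p e * (\<Prod>g\<in>fst e. site_prob u (1 - \<nu>) (flip G x (snd e g)) (flip G y g)) *
        (\<Prod>g\<in>G - fst e. if flip G y g = flip G x g then 1 else 0) =
        p e * (\<Prod>g\<in>fst e. site_prob u \<nu> (x (snd e g)) (y g)) *
        (\<Prod>g\<in>G - fst e. if y g = x g then 1 else 0)" by simp
qed

lemma sum_flip:
  "(\<Sum>x\<in>states G. f (flip G x)) = (\<Sum>x\<in>states G. f x)"
  by (rule sum.reindex_bij_witness[where i="flip G" and j="flip G"])
     (auto simp: flip_states flip_flip)


lemma support_closed:
  assumes "\<forall>x\<in>S. \<mu> x \<ge> (0::real)"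
    and "\<forall>y\<in>S. \<mu> y = (\<Sum>x\<in>S. \<mu> x * P x y)"
    and "\<forall>x\<in>S. \<forall>y\<in>S. P x y \<ge> 0" and "finite S"
    and "(\<lambda>x y. x \<in> S \<and> y \<in> S \<and> P x y > 0)\<^sup>*\<^sup>* x y" and "x \<in> S" and "\<mu> x > 0"
  shows "\<mu> y > 0"
  using assms(5-7)
proof (induction rule: rtranclp_induct)
  case base then show ?case by simp
next
  case (step y z)
  then have yz: "y \<in> S" "z \<in> S" "P y z > 0" "\<mu> y > 0" by auto
  have "0 < \<mu> y * P y z" using yz by simp
  also have "\<dots> \<le> (\<Sum>x\<in>S. \<mu> x * P x z)"
    by (rule member_le_sum) (use assms yz in auto)
  also have "\<dots> = \<mu> z" using assms(2) yz by simp
  finally show ?case .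
qed

lemma unique_stat:
  assumes fin: "finite S"
    and irr: "\<forall>x\<in>S. \<forall>y\<in>S. (\<lambda>x y. x \<in> S \<and> y \<in> S \<and> P x y > 0)\<^sup>*\<^sup>* x y"
    and Pnn: "\<forall>x\<in>S. \<forall>y\<in>S. P x y \<ge> (0::real)"
    and a1: "\<forall>x\<in>S. \<pi> x \<ge> 0" "(\<Sum>x\<in>S. \<pi> x) = 1" "\<forall>y\<in>S. \<pi> y = (\<Sum>x\<in>S. \<pi> x * P x y)"
    and a2: "\<forall>x\<in>S. \<rho> x \<ge> 0" "(\<Sum>x\<in>S. \<rho> x) = 1" "\<forall>y\<in>S. \<rho> y = (\<Sum>x\<in>S. \<rho> x * P x y)"
  shows "\<forall>x\<in>S. \<pi> x = \<rho> x"
proof -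
  have zero: "\<forall>x\<in>S. \<mu> x = 0"
    if nn: "\<forall>x\<in>S. \<mu> x \<ge> (0::real)" and inv: "\<forall>y\<in>S. \<mu> y = (\<Sum>x\<in>S. \<mu> x * P x y)"
      and z: "x0 \<in> S" "\<mu> x0 = 0" for \<mu> x0
  proof (rule ccontr)
    assume "\<not> (\<forall>x\<in>S. \<mu> x = 0)"
    then obtain x where x: "x \<in> S" "\<mu> x \<noteq> 0" by blast
    with nn have "\<mu> x > 0" by force
    then have "\<mu> x0 > 0"
      using support_closed[OF nn inv Pnn fin _ x(1)] irr x z by blast
    with z show False by simp
  qed
  have S_ne: "S \<noteq> {}" using a2(2) by auto
  have rpos: "\<forall>x\<in>S. \<rho> x > 0"
  proof (rule ccontr)
    assume "\<not> (\<forall>x\<in>S. \<rho> x > 0)"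
    then obtain x0 where "x0 \<in> S" "\<rho> x0 = 0" using a2(1) by force
    then have "\<forall>x\<in>S. \<rho> x = 0" using zero[OF a2(1) a2(3)] by blast
    then have "(\<Sum>x\<in>S. \<rho> x) = 0" by simp
    with a2(2) show False by simp
  qed
  define t where "t = Min ((\<lambda>x. \<pi> x / \<rho> x) ` S)"
  have "t \<in> (\<lambda>x. \<pi> x / \<rho> x) ` S"
    unfolding t_def using fin S_ne by (intro Min_in) auto
  then obtain x0 where x0: "x0 \<in> S" "t = \<pi> x0 / \<rho> x0" by blast
  have tle: "t \<le> \<pi> x / \<rho> x" if "x \<in> S" for x
    unfolding t_def using fin that by (intro Min_le) auto
  define \<mu> where "\<mu> = (\<lambda>x. \<pi> x - t * \<rho> x)"
  have mnn: "\<forall>x\<in>S. \<mu> x \<ge> 0"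
  proof
    fix x assume x: "x \<in> S"
    have "t * \<rho> x \<le> \<pi> x" using tle[OF x] rpos x by (simp add: pos_le_divide_eq)
    then show "\<mu> x \<ge> 0" unfolding \<mu>_def by simp
  qed
  have minv: "\<forall>y\<in>S. \<mu> y = (\<Sum>x\<in>S. \<mu> x * P x y)"
  proof
    fix y assume y: "y \<in> S"
    have "(\<Sum>x\<in>S. \<mu> x * P x y) = (\<Sum>x\<in>S. \<pi> x * P x y) - t * (\<Sum>x\<in>S. \<rho> x * P x y)"
      unfolding \<mu>_def by (simp add: sum_subtractf sum_distrib_left algebra_simps)
    also have "\<dots> = \<mu> y" unfolding \<mu>_def using a1(3) a2(3) y by simp
    finally show "\<mu> y = (\<Sum>x\<in>S. \<mu> x * P x y)" by simp
  qed
  have "\<rho> x0 > 0" using x0(1) rpos by blast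
  then have "\<mu> x0 = 0" unfolding \<mu>_def using x0 by simp
  then have m0: "\<forall>x\<in>S. \<mu> x = 0" using zero[OF mnn minv x0(1)] by blast
  then have eq: "\<forall>x\<in>S. \<pi> x = t * \<rho> x" unfolding \<mu>_def by simp
  have "1 = (\<Sum>x\<in>S. t * \<rho> x)" using a1(2) eq by (metis (mono_tags, lifting) sum.cong)
  also have "\<dots> = t" using a2(2) by (simp add: sum_distrib_left[symmetric])
  finally show ?thesis using eq by simp
qed


lemma reach_list:
  assumes rr: "replacement_rule G p" and pr: "0 < u" "u \<le> 1" "0 < \<nu>" "\<nu> < 1"
    and es: "\<forall>e\<in>set es. p e > 0"
    and x: "x \<in> states G" and y: "y \<in> states G"
  shows "(\<lambda>x y. x \<in> states G \<and> y \<in> states G \<and> trans_prob G p u \<nu> x y > 0)\<^sup>*\<^sup>* x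
           (\<lambda>g. if g \<in> (\<Union>e\<in>set es. fst e) then y g else x g)"
  using es x
proof (induction es arbitrary: x)
  case Nil then show ?case by simp
next
  case (Cons e es)
  have "p e > 0" using Cons.prems(1) by simp
  then have ev: "e \<in> events G"
    using rr unfolding replacement_rule_def by (metis less_irrefl)
  define x1 where "x1 = (\<lambda>g. if g \<in> fst e then y g else x g)"
  have x1s: "x1 \<in> states G" using Cons.prems(2) y ev
    unfolding x1_def states_def events_def by auto
  have "trans_prob G p u \<nu> x x1 > 0"
    by (rule trans_pos[OF rr pr ev]) (use Cons.prems in \<open>auto simp: x1_def\<close>)
  then have st: "(\<lambda>x y. x \<in> states G \<and> y \<in> states G \<and> trans_prob G p u \<nu> x y > 0) x x1"
    using Cons.prems(2) x1s by blast
  have IH: "(\<lambda>x y. x \<in> states G \<and> y \<in> states G \<and> trans_prob G p u \<nu> x y > 0)\<^sup>*\<^sup>* x1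
           (\<lambda>g. if g \<in> (\<Union>e\<in>set es. fst e) then y g else x1 g)"
    using Cons.IH Cons.prems x1s by simp
  have eq: "(\<lambda>g. if g \<in> (\<Union>e\<in>set es. fst e) then y g else x1 g)
     = (\<lambda>g. if g \<in> (\<Union>e\<in>set (e # es). fst e) then y g else x g)"
    unfolding x1_def by auto
  show ?case using converse_rtranclp_into_rtranclp[OF st IH] eq by simp
qed

lemma irreducible:
  assumes rr: "replacement_rule G p" and fa: "fixation_axiom G p"
    and pr: "0 < u" "u \<le> 1" "0 < \<nu>" "\<nu> < 1"
  shows "\<forall>x\<in>states G. \<forall>y\<in>states G.
    (\<lambda>x y. x \<in> states G \<and> y \<in> states G \<and> trans_prob G p u \<nu> x y > 0)\<^sup>*\<^sup>* x y"
proof (intro ballI)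
  fix x y assume x: "x \<in> states G" and y: "y \<in> states G"
  obtain g es where g: "g \<in> G" and es: "\<forall>e\<in>set es. p e > 0" "\<exists>e\<in>set es. g \<in> fst e"
    and comp: "\<forall>h\<in>G. foldr (\<circ>) (map snd es) id h = g"
    using fa unfolding fixation_axiom_def by blast
  have ev: "\<forall>e\<in>set es. e \<in> events G"
    using es(1) rr unfolding replacement_rule_def by (metis less_irrefl)
  have cover: "G \<subseteq> (\<Union>e\<in>set es. fst e)"
  proof
    fix h assume h: "h \<in> G"
    show "h \<in> (\<Union>e\<in>set es. fst e)"
    proof (rule ccontr)
      assume nh: "h \<notin> (\<Union>e\<in>set es. fst e)"
      then have "foldr (\<circ>) (map snd es) id h = h" using ev by (intro foldr_fix) auto
      with comp h have "h = g" by simp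
      with nh es(2) show False by blast
    qed
  qed
  have sub: "(\<Union>e\<in>set es. fst e) \<subseteq> G"
  proof
    fix h assume "h \<in> (\<Union>e\<in>set es. fst e)"
    then obtain e where "e \<in> set es" "h \<in> fst e" by blast
    with ev show "h \<in> G" unfolding events_def by (cases e) auto
  qed
  have "(\<lambda>g. if g \<in> (\<Union>e\<in>set es. fst e) then y g else x g) = y"
  proof
    fix h show "(if h \<in> (\<Union>e\<in>set es. fst e) then y h else x h) = y h"
      using cover sub x y unfolding states_def by auto
  qed
  then show "(\<lambda>x y. x \<in> states G \<and> y \<in> states G \<and> trans_prob G p u \<nu> x y > 0)\<^sup>*\<^sup>* x y"
    using reach_list[OF rr pr es(1) x y] by simp
qed

theorem proposition3:
  fixes G :: "'g set" and p :: "'g set \<times> ('g \<Rightarrow> 'g) \<Rightarrow> real"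
    and u \<nu> :: real and \<pi>1 \<pi>2 :: "('g \<Rightarrow> bool) \<Rightarrow> real"
  assumes "finite G" and "G \<noteq> {}"
    and "replacement_rule G p" and "fixation_axiom G p"
    and "0 < u" and "u \<le> 1" and "0 < \<nu>" and "\<nu> < 1"
    and "stationary G p u \<nu> \<pi>1"
    and "stationary G p u (1 - \<nu>) \<pi>2"
  shows "\<forall>x\<in>states G. \<pi>1 x = \<pi>2 (flip G x)"
proof -
  have s1: "\<forall>x\<in>states G. \<pi>1 x \<ge> 0" "(\<Sum>x\<in>states G. \<pi>1 x) = 1"
    "\<forall>y\<in>states G. \<pi>1 y = (\<Sum>x\<in>states G. \<pi>1 x * trans_prob G p u \<nu> x y)"
    using assms(9) unfolding stationary_def by blast+
  have s2: "\<forall>x\<in>states G. \<pi>2 x \<ge> 0" "(\<Sum>x\<in>states G. \<pi>2 x) = 1"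
    "\<forall>y\<in>states G. \<pi>2 y = (\<Sum>x\<in>states G. \<pi>2 x * trans_prob G p u (1 - \<nu>) x y)"
    using assms(10) unfolding stationary_def by blast+
  have a1: "\<forall>x\<in>states G. \<pi>2 (flip G x) \<ge> 0" using s2 flip_states by blast
  have a2: "(\<Sum>x\<in>states G. \<pi>2 (flip G x)) = 1" using s2(2) sum_flip[of "\<pi>2" G] by simp
  have a3: "\<forall>y\<in>states G. \<pi>2 (flip G y) = (\<Sum>x\<in>states G. \<pi>2 (flip G x) * trans_prob G p u \<nu> x y)"
  proof
    fix y assume y: "y \<in> states G"
    have "\<pi>2 (flip G y) = (\<Sum>x\<in>states G. \<pi>2 x * trans_prob G p u (1 - \<nu>) x (flip G y))"
      using s2(3) flip_states[OF y] by blast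
    also have "\<dots> = (\<Sum>x\<in>states G. \<pi>2 (flip G x) * trans_prob G p u (1 - \<nu>) (flip G x) (flip G y))"
      using sum_flip[of "\<lambda>x. \<pi>2 x * trans_prob G p u (1 - \<nu>) x (flip G y)" G] by simp
    also have "\<dots> = (\<Sum>x\<in>states G. \<pi>2 (flip G x) * trans_prob G p u \<nu> x y)"
      by (rule sum.cong[OF refl]) (simp add: trans_flip y)
    finally show "\<pi>2 (flip G y) = (\<Sum>x\<in>states G. \<pi>2 (flip G x) * trans_prob G p u \<nu> x y)" .
  qed
  show ?thesis
    by (rule unique_stat[where P="trans_prob G p u \<nu>" and \<rho>="\<lambda>x. \<pi>2 (flip G x)",
          OF states_finite[OF assms(1)] irreducible[OF assms(3,4,5,6,7,8)]])
       (use trans_nonneg[OF assms(3,5,6,7,8)] s1 a1 a2 a3 in blast)+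
qed

end
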